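(* The propagation detector $\mathit{PROP}$ is equivalent to the age detector $\mathit{AGE}$: $\mathit{PROP} \equiv \mathit{AGE}$.
   Context: Setting: peers communicate over reliable FIFO channels in a purely asynchronous system; a network split (at most one per computation, no reconnection) divides the network into two nonempty partitions, after which messages are delivered only within the sender's partition; messages sent before the split are delivered to all peers. Each mined block is broadcast immediately after mining. A detector is an algorithm whose actions may use information outside the model; its output variables are read by another algorithm $\mathit{ALG}$, and the actions of the two interleave fairly. For a block detector, each peer has, per block, an input variable $in$ and an output variable $out$, both initially $\bot$; $\mathit{ALG}$ writes $in$ and reads $out$. $\mathit{PROP}$: if a suffix of the computation has $in=b$ for a block $b$ mined by $\mathit{ALG}$, then $out$ is $\bot$ on a prefix and then permanently $\mathbf{true}$ if $b$ was received by all peers of the network, or permanently $\mathbf{false}$ if $b$ was delivered only within a partition. $\mathit{AGE}$: same, but the final permanent output is $old$ if $b$ was mined before the split and $new$ if mined after it. Detector $A$ is weaker than detector $B$ if there is an algorithm that takes every computation of $A$ and produces a computation of $B$. $A \equiv B$ if each is weaker than the other; $A \prec B$ (A strictly weaker than $B$) if $A$ is weaker than $B$ but not equivalent. *)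

theory Defs
  imports Main
begin

(* Abstract model of the setting.
   'p : peers (finite), 'b : blocks, time is nat (global discrete time of the
   fair interleaving).  Detector instances are indexed per block ('b). *)

record ('p, 'b) env =
  split_time :: "nat option"     (* None: no split ever happens *)
  side       :: "'p set"         (* one partition; the other is its complement *)
  mined      :: "'b \<Rightarrow> ('p \<times> nat) option"  (* miner and mining time of blocks mined by ALG *)
  recv       :: "'b \<Rightarrow> 'p \<Rightarrow> bool"  (* peer eventually receives the block *)

definition mined_before_split :: "('p, 'b) env \<Rightarrow> nat \<Rightarrow> bool" where
  "mined_before_split E tm \<longleftrightarrow> (case split_time E of None \<Rightarrow> True | Some ts \<Rightarrow> tm < ts)"

definition partition_of :: "('p, 'b) env \<Rightarrow> 'p \<Rightarrow> 'p set" where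
  "partition_of E q = (if q \<in> side E then side E else - side E)"

definition valid_env :: "('p, 'b) env \<Rightarrow> bool" where
  "valid_env E \<longleftrightarrow>
     (split_time E \<noteq> None \<longrightarrow> side E \<noteq> {} \<and> side E \<noteq> UNIV) \<and>
     (\<forall>b q tm. mined E b = Some (q, tm) \<longrightarrow>
        (if mined_before_split E tm then (\<forall>p. recv E b p)
         else (\<forall>p. recv E b p \<longleftrightarrow> p \<in> partition_of E q)))"

definition received_by_all :: "('p, 'b) env \<Rightarrow> 'b \<Rightarrow> bool" where
  "received_by_all E b \<longleftrightarrow> (\<forall>p. recv E b p)"

definition delivered_only_within_partition :: "('p, 'b) env \<Rightarrow> 'b \<Rightarrow> bool" where
  "delivered_only_within_partition E b \<longleftrightarrow>
     split_time E \<noteq> None \<and>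
     (\<exists>P \<in> {side E, - side E}. \<forall>p. recv E b p \<longleftrightarrow> p \<in> P)"

(* histories of the detector variables: value at time t, peer p, instance (block) k;
   None plays the role of \<bottom> *)
type_synonym ('p, 'b) in_hist = "nat \<Rightarrow> 'p \<Rightarrow> 'b \<Rightarrow> 'b option"
type_synonym ('p, 'b, 'o) out_hist = "nat \<Rightarrow> 'p \<Rightarrow> 'b \<Rightarrow> 'o option"

(* a detector = its set of admissible computations (env, in-history, out-history) *)
type_synonym ('p, 'b, 'o) detector =
  "('p, 'b) env \<Rightarrow> ('p, 'b) in_hist \<Rightarrow> ('p, 'b, 'o) out_hist \<Rightarrow> bool"

definition eventually_always_in :: "('p, 'b) in_hist \<Rightarrow> 'p \<Rightarrow> 'b \<Rightarrow> 'b \<Rightarrow> bool" where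
  "eventually_always_in inp p k b \<longleftrightarrow> (\<exists>t0. \<forall>t\<ge>t0. inp t p k = Some b)"

definition bot_then_forever :: "('p, 'b, 'o) out_hist \<Rightarrow> 'p \<Rightarrow> 'b \<Rightarrow> 'o \<Rightarrow> bool" where
  "bot_then_forever out p k v \<longleftrightarrow>
     (\<exists>t0. (\<forall>t<t0. out t p k = None) \<and> (\<forall>t\<ge>t0. out t p k = Some v))"

definition PROP_det :: "('p, 'b, bool) detector" where
  "PROP_det E inp out \<longleftrightarrow>
     (\<forall>p k b q tm. eventually_always_in inp p k b \<and> mined E b = Some (q, tm) \<longrightarrow>
        (received_by_all E b \<longrightarrow> bot_then_forever out p k True) \<and>
        (delivered_only_within_partition E b \<longrightarrow> bot_then_forever out p k False))"

datatype age = Old | New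

definition AGE_det :: "('p, 'b, age) detector" where
  "AGE_det E inp out \<longleftrightarrow>
     (\<forall>p k b q tm. eventually_always_in inp p k b \<and> mined E b = Some (q, tm) \<longrightarrow>
        (mined_before_split E tm \<longrightarrow> bot_then_forever out p k Old) \<and>
        (\<not> mined_before_split E tm \<longrightarrow> bot_then_forever out p k New))"

(* A transformation algorithm, run at every peer p: at time t it writes the
   input variables of the underlying detector A (gi) and the output variables of
   the emulated detector B (go), as functions of p's local history of B's input
   variables (written by ALG) and of A's output variables. *)
definition causal_transform ::
  "('p \<Rightarrow> nat \<Rightarrow> (nat \<Rightarrow> 'b \<Rightarrow> 'b option) \<Rightarrow> (nat \<Rightarrow> 'b \<Rightarrow> 'oa option) \<Rightarrow> 'b \<Rightarrow> 'b option)
   \<Rightarrow> ('p \<Rightarrow> nat \<Rightarrow> (nat \<Rightarrow> 'b \<Rightarrow> 'b option) \<Rightarrow> (nat \<Rightarrow> 'b \<Rightarrow> 'oa option) \<Rightarrow> 'b \<Rightarrow> 'ob option)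
   \<Rightarrow> bool" where
  "causal_transform gi go \<longleftrightarrow>
     (\<forall>p t hi hi' ho ho'.
        (\<forall>s\<le>t. hi s = hi' s) \<and> (\<forall>s<t. ho s = ho' s) \<longrightarrow> gi p t hi ho = gi p t hi' ho') \<and>
     (\<forall>p t hi hi' ho ho'.
        (\<forall>s\<le>t. hi s = hi' s) \<and> (\<forall>s\<le>t. ho s = ho' s) \<longrightarrow> go p t hi ho = go p t hi' ho')"

definition weaker :: "('p, 'b, 'oa) detector \<Rightarrow> ('p, 'b, 'ob) detector \<Rightarrow> bool" where
  "weaker A B \<longleftrightarrow>
     (\<exists>gi go. causal_transform gi go \<and>
        (\<forall>E inB outA. valid_env E \<longrightarrow>
           A E (\<lambda>t p. gi p t (\<lambda>s. inB s p) (\<lambda>s. outA s p)) outA \<longrightarrow>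
           B E inB (\<lambda>t p. go p t (\<lambda>s. inB s p) (\<lambda>s. outA s p))))"

definition det_equiv :: "('p, 'b, 'oa) detector \<Rightarrow> ('p, 'b, 'ob) detector \<Rightarrow> bool" where
  "det_equiv A B \<longleftrightarrow> weaker A B \<and> weaker B A"

end

theory Submission
  imports Defs
begin

lemma btf_map:
  "bot_then_forever out p k v \<Longrightarrow>
   bot_then_forever (\<lambda>t p. (\<lambda>k. map_option f (out t p k))) p k (f v)"
  unfolding bot_then_forever_def by auto

lemma before_all:
  assumes "valid_env E" "mined E b = Some (q, tm)" "mined_before_split E tm"
  shows "received_by_all E b" "\<not> delivered_only_within_partition E b"
proof -
  have r: "\<forall>p. recv E b p"
    using assms unfolding valid_env_def by (metis (no_types, lifting))
  then show "received_by_all E b" unfolding received_by_all_def by blast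
  show "\<not> delivered_only_within_partition E b"
  proof
    assume d: "delivered_only_within_partition E b"
    then have st: "split_time E \<noteq> None" unfolding delivered_only_within_partition_def by blast
    then have sd: "side E \<noteq> {}" "side E \<noteq> UNIV" using assms(1) unfolding valid_env_def by auto
    from d obtain P where "P \<in> {side E, - side E}" "\<forall>p. recv E b p \<longleftrightarrow> p \<in> P"
      unfolding delivered_only_within_partition_def by blast
    then have "P = UNIV" using r by auto
    then show False using sd \<open>P \<in> {side E, - side E}\<close> by auto
  qed
qed

lemma after_part:
  assumes "valid_env E" "mined E b = Some (q, tm)" "\<not> mined_before_split E tm"
  shows "\<not> received_by_all E b" "delivered_only_within_partition E b"
proof -
  have st: "split_time E \<noteq> None" using assms(3) unfolding mined_before_split_def by (auto split: option.splits)
  have sd: "side E \<noteq> {}" "side E \<noteq> UNIV" using assms(1) st unfolding valid_env_def by auto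
  have r: "\<forall>p. recv E b p \<longleftrightarrow> p \<in> partition_of E q"
    using assms unfolding valid_env_def by (metis (no_types, lifting))
  show "delivered_only_within_partition E b"
    unfolding delivered_only_within_partition_def using st r
    by (auto simp: partition_of_def split: if_splits)
  show "\<not> received_by_all E b"
    unfolding received_by_all_def using r sd
    by (auto simp: partition_of_def split: if_splits)
qed

theorem lemma2:
  shows "det_equiv (PROP_det :: ('p::finite, 'b, bool) detector) (AGE_det :: ('p, 'b, age) detector)"
proof -
  have ct: "causal_transform (\<lambda>p t hi ho. hi t) (\<lambda>p t hi ho k. map_option f (ho t k))" for f :: "'x \<Rightarrow> 'y"
    unfolding causal_transform_def by auto
  have w1: "weaker (PROP_det :: ('p, 'b, bool) detector) (AGE_det :: ('p, 'b, age) detector)"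
    unfolding weaker_def
  proof (intro exI conjI allI impI)
    show "causal_transform (\<lambda>p t hi ho. hi t) (\<lambda>p t hi ho k. map_option (\<lambda>x. if x then Old else New) (ho t k))"
      by (rule ct)
    fix E and inB :: "('p,'b) in_hist" and outA :: "('p,'b,bool) out_hist"
    assume v: "valid_env E" and A: "PROP_det E (\<lambda>t p. (\<lambda>s. inB s p) t) outA"
    show "AGE_det E inB (\<lambda>t p. (\<lambda>k. map_option (\<lambda>x. if x then Old else New) ((\<lambda>s. outA s p) t k)))"
      unfolding AGE_det_def
    proof (intro allI impI conjI)
      fix p k b q tm
      assume h: "eventually_always_in inB p k b \<and> mined E b = Some (q, tm)"
      have A': "(received_by_all E b \<longrightarrow> bot_then_forever outA p k True) \<and>
        (delivered_only_within_partition E b \<longrightarrow> bot_then_forever outA p k False)"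
        using A h unfolding PROP_det_def eventually_always_in_def by (metis (no_types, lifting))
      { assume "mined_before_split E tm"
        then show "bot_then_forever (\<lambda>t p k. map_option (\<lambda>x. if x then Old else New) (outA t p k)) p k Old"
          using before_all[OF v] h A' btf_map[of outA p k True "\<lambda>x. if x then Old else New"] by auto }
      { assume "\<not> mined_before_split E tm"
        then show "bot_then_forever (\<lambda>t p k. map_option (\<lambda>x. if x then Old else New) (outA t p k)) p k New"
          using after_part[OF v] h A' btf_map[of outA p k False "\<lambda>x. if x then Old else New"] by auto }
    qed
  qed
  have w2: "weaker (AGE_det :: ('p, 'b, age) detector) (PROP_det :: ('p, 'b, bool) detector)"
    unfolding weaker_def
  proof (intro exI conjI allI impI)
    show "causal_transform (\<lambda>p t hi ho. hi t) (\<lambda>p t hi ho k. map_option (\<lambda>x. x = Old) (ho t k))"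
      by (rule ct)
    fix E and inB :: "('p,'b) in_hist" and outA :: "('p,'b,age) out_hist"
    assume v: "valid_env E" and A: "AGE_det E (\<lambda>t p. (\<lambda>s. inB s p) t) outA"
    show "PROP_det E inB (\<lambda>t p. (\<lambda>k. map_option (\<lambda>x. x = Old) ((\<lambda>s. outA s p) t k)))"
      unfolding PROP_det_def
    proof (intro allI impI conjI)
      fix p k b q tm
      assume h: "eventually_always_in inB p k b \<and> mined E b = Some (q, tm)"
      have A': "(mined_before_split E tm \<longrightarrow> bot_then_forever outA p k Old) \<and>
        (\<not> mined_before_split E tm \<longrightarrow> bot_then_forever outA p k New)"
        using A h unfolding AGE_det_def eventually_always_in_def by (metis (no_types, lifting))
      { assume "received_by_all E b"
        then show "bot_then_forever (\<lambda>t p k. map_option (\<lambda>x. x = Old) (outA t p k)) p k True"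
          using after_part[OF v] h A' btf_map[of outA p k Old "\<lambda>x. x = Old"] by auto }
      { assume "delivered_only_within_partition E b"
        then show "bot_then_forever (\<lambda>t p k. map_option (\<lambda>x. x = Old) (outA t p k)) p k False"
          using before_all[OF v] h A' btf_map[of outA p k New "\<lambda>x. x = Old"] by auto }
    qed
  qed
  show ?thesis unfolding det_equiv_def using w1 w2 by blast
qed

end
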